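(* Let $d\ge 0$ be an integer. There exist an instance domain $\mathcal{X}$ and a hypothesis class $\mathcal{H}$ with Littlestone dimension $\mathrm{Ldim}(\mathcal{H})=d<\infty$ such that the following holds for all integers $k,l\ge 0$: if $k<l+d$, then for any integer $m\ge 0$ there exists a strategy of the adversary, all of whose presented sequences satisfy the $l$-bias assumption with respect to $\mathcal{H}$, that forces any deterministic learning algorithm guaranteeing at most $k$ mistakes (on all sequences satisfying the $l$-bias assumption with respect to $\mathcal{H}$) to have at least $m+1$ nontrivial rounds.
   Context: Online classification with abstention: at each round $t$ the adversary presents $x_t\in\mathcal{X}$, the learner predicts $\hat y_t\in\{-1,+1,\bot\}$ ($\bot$ = abstain), then the adversary reveals $y_t\in\{-1,+1\}$. A mistake is a round with $\hat y_t=-y_t$; a round is nontrivial if the learner makes a mistake or abstains. A deterministic learner's prediction is a deterministic function of the past labeled examples and the current example; the adversary may act adaptively. Hypotheses are maps $\mathcal{X}\to\{-1,+1\}$. For classes, $\mathcal{H}_1\cdot\mathcal{H}_2=\{x\mapsto h_1(x)h_2(x):h_i\in\mathcal{H}_i\}$. $\mathcal{C}^l$ is the class of functions $x\mapsto 1-2I(x\in D)$ for $D\subseteq\mathcal{X}$, $|D|\le l$, and $\mathcal{H}^l=\mathcal{H}\cdot\mathcal{C}^l$. A sequence $(x_1,y_1),\dots,(x_n,y_n)$ satisfies the $l$-bias assumption w.r.t. $\mathcal{H}$ if some $h\in\mathcal{H}^l$ has $h(x_t)=y_t$ for all $t$. The Littlestone dimension $\mathrm{Ldim}(\mathcal{H})$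 is the largest $d$ such that there is a complete binary tree of depth $d$ whose internal nodes are labeled by points of $\mathcal{X}$ such that for every root-to-leaf path (going left means label $-1$, right means $+1$) some $h\in\mathcal{H}$ agrees with all labels along the path. *)

theory Defs
  imports Main
begin

text \<open>Labels are the integers -1 and +1. A prediction is an
int option: None is abstention, Some y a label prediction.
A hypothesis is a function nat to int; only its values on X matter.\<close>

type_synonym hyp = "nat \<Rightarrow> int"
type_synonym labeled_seq = "(nat \<times> int) list"
type_synonym learner = "labeled_seq \<Rightarrow> nat \<Rightarrow> int option"
type_synonym history = "(nat \<times> int option \<times> int) list"
type_synonym adv_x = "history \<Rightarrow> nat option"
type_synonym adv_y = "history \<Rightarrow> nat \<Rightarrow> int option \<Rightarrow> int"

definition hyp_class :: "nat set \<Rightarrow> hyp set \<Rightarrow> bool" where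
  "hyp_class X H \<longleftrightarrow> (\<forall>h\<in>H. \<forall>x\<in>X. h x \<in> {-1, 1})"

definition class_mult :: "hyp set \<Rightarrow> hyp set \<Rightarrow> hyp set" where
  "class_mult H1 H2 = {f. \<exists>h1\<in>H1. \<exists>h2\<in>H2. f = (\<lambda>x. h1 x * h2 x)}"

definition corr_class :: "nat set \<Rightarrow> nat \<Rightarrow> hyp set" where
  "corr_class X l = {f. \<exists>D. D \<subseteq> X \<and> finite D \<and> card D \<le> l \<and>
      f = (\<lambda>x. 1 - 2 * (if x \<in> D then 1 else 0))}"

definition biased_class :: "nat set \<Rightarrow> hyp set \<Rightarrow> nat \<Rightarrow> hyp set" where
  "biased_class X H l = class_mult H (corr_class X l)"

definition l_bias :: "nat set \<Rightarrow> hyp set \<Rightarrow> nat \<Rightarrow> labeled_seq \<Rightarrow> bool" where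
  "l_bias X H l s \<longleftrightarrow> (\<exists>h\<in>biased_class X H l. \<forall>t<length s. h (fst (s ! t)) = snd (s ! t))"

text \<open>Littlestone trees: a complete binary tree of depth d is a labeling T of all
label-prefixes (lists over {-1,1}) of length < d by points of X; the node reached after
the labels p is T p.\<close>
definition shatters_tree :: "nat set \<Rightarrow> hyp set \<Rightarrow> nat \<Rightarrow> bool" where
  "shatters_tree X H d \<longleftrightarrow> (\<exists>T :: int list \<Rightarrow> nat.
      (\<forall>p. length p < d \<and> set p \<subseteq> {-1, 1} \<longrightarrow> T p \<in> X) \<and>
      (\<forall>ys. length ys = d \<and> set ys \<subseteq> {-1, 1} \<longrightarrow>
          (\<exists>h\<in>H. \<forall>i<d. h (T (take i ys)) = ys ! i)))"

definition ldim_eq :: "nat set \<Rightarrow> hyp set \<Rightarrow> nat \<Rightarrow> bool" where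
  "ldim_eq X H d \<longleftrightarrow> shatters_tree X H d \<and> (\<forall>d'. shatters_tree X H d' \<longrightarrow> d' \<le> d)"

definition valid_learner :: "learner \<Rightarrow> bool" where
  "valid_learner L \<longleftrightarrow> (\<forall>s x. L s x \<in> {None, Some (-1), Some 1})"

definition mistakes :: "learner \<Rightarrow> labeled_seq \<Rightarrow> nat" where
  "mistakes L s = card {t. t < length s \<and> L (take t s) (fst (s ! t)) = Some (- snd (s ! t))}"

definition guarantees :: "nat set \<Rightarrow> hyp set \<Rightarrow> nat \<Rightarrow> nat \<Rightarrow> learner \<Rightarrow> bool" where
  "guarantees X H l k L \<longleftrightarrow> (\<forall>s. (\<forall>t<length s. fst (s ! t) \<in> X) \<and> l_bias X H l s \<longrightarrow> mistakes L s \<le> k)"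

definition labels_of :: "history \<Rightarrow> labeled_seq" where
  "labels_of h = map (\<lambda>(x, p, y). (x, y)) h"

text \<open>The interaction of an adaptive adversary (ax presents the next point or stops with None;
ay reveals the label after seeing the prediction) with a deterministic learner, after n steps.\<close>
fun play :: "adv_x \<Rightarrow> adv_y \<Rightarrow> learner \<Rightarrow> nat \<Rightarrow> history" where
  "play ax ay L 0 = []"
| "play ax ay L (Suc n) = (let h = play ax ay L n in
     (case ax h of None \<Rightarrow> h
      | Some x \<Rightarrow> (let p = L (labels_of h) x in h @ [(x, p, ay h x p)])))"

definition nontrivial_rounds :: "history \<Rightarrow> nat" where
  "nontrivial_rounds h = card {t. t < length h \<and>
      (fst (snd (h ! t)) = Some (- snd (snd (h ! t))) \<or> fst (snd (h ! t)) = None)}"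

end

theory Submission
  imports Defs
begin

definition AX :: adv_x where "AX h = Some (length h)"
definition cnt :: "history \<Rightarrow> nat" where
  "cnt h = length (filter (\<lambda>e. snd (snd e) = (-1::int)) h)"
definition AY :: "nat \<Rightarrow> adv_y" where
  "AY B h x p = (if p = Some 1 \<and> cnt h < B then -1 else 1)"

lemma play_len: "length (play AX ay L n) = n"
  by (induction n) (auto simp: AX_def Let_def)

lemma play_Suc': "play AX ay L (Suc n) = play AX ay L n @
   [(n, L (labels_of (play AX ay L n)) n, ay (play AX ay L n) n (L (labels_of (play AX ay L n)) n))]"
  by (simp add: AX_def Let_def play_len)

declare play.simps(2)[simp del]

lemma play_take: "t \<le> N \<Longrightarrow> take t (play AX ay L N) = play AX ay L t"
proof (induction N)
  case 0 then show ?case by simp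
next
  case (Suc N)
  show ?case
  proof (cases "t = Suc N")
    case True then show ?thesis by (simp add: play_len)
  next
    case False then have "t \<le> N" using Suc by simp
    then show ?thesis using Suc by (simp add: play_Suc' play_len)
  qed
qed

lemma play_nth: "t < N \<Longrightarrow> play AX ay L N ! t =
   (t, L (labels_of (play AX ay L t)) t, ay (play AX ay L t) t (L (labels_of (play AX ay L t)) t))"
proof -
  assume "t < N"
  then have "play AX ay L N ! t = take (Suc t) (play AX ay L N) ! t" by simp
  also have "\<dots> = play AX ay L (Suc t) ! t" using \<open>t < N\<close> play_take[of "Suc t" N] by simp
  also have "\<dots> = (t, L (labels_of (play AX ay L t)) t, ay (play AX ay L t) t (L (labels_of (play AX ay L t)) t))" by (simp add: play_Suc' nth_append play_len)
  finally show ?thesis .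
qed

lemma labels_len: "length (labels_of h) = length h"
  by (simp add: labels_of_def)

lemma labels_nth: "t < length h \<Longrightarrow> labels_of h ! t = (fst (h ! t), snd (snd (h ! t)))"
  by (simp add: labels_of_def split: prod.splits)

lemma labels_take: "take t (labels_of h) = labels_of (take t h)"
  by (simp add: labels_of_def take_map)

lemma cnt_inv: "cnt (play AX (AY B) L n) \<le> B"
  by (induction n) (auto simp: play_Suc' cnt_def AY_def)

lemma cnt_card: "cnt h = card {t. t < length h \<and> snd (snd (h ! t)) = -1}"
  by (simp add: cnt_def length_filter_conv_card)

lemma corr_mem: "finite D \<Longrightarrow> card D \<le> l \<Longrightarrow>
   (\<lambda>x. if x \<in> D then -1 else 1::int) \<in> corr_class UNIV l"
  unfolding corr_class_def by (rule CollectI, rule exI[of _ D]) (auto simp: fun_eq_iff)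

lemma biased_mem:
  assumes "finite N" "card N \<le> d + l"
  shows "(\<lambda>x. if x \<in> N then -1 else 1::int) \<in> biased_class UNIV (corr_class UNIV d) l"
proof -
  obtain D1 where D1: "D1 \<subseteq> N" "card D1 = min d (card N)" "finite D1"
    using obtain_subset_with_card_n[of "min d (card N)" N] by auto
  define D2 where "D2 = N - D1"
  have "card D2 = card N - card D1" unfolding D2_def using D1 assms by (simp add: card_Diff_subset)
  then have c2: "card D2 \<le> l" using D1 assms by linarith
  have f2: "finite D2" using assms D2_def by simp
  have "(\<lambda>x. if x \<in> N then -1 else 1::int) =
     (\<lambda>x. (if x \<in> D1 then -1 else 1) * (if x \<in> D2 then -1 else 1))"
    using D1 by (auto simp: fun_eq_iff D2_def)
  then show ?thesis unfolding biased_class_def class_mult_def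
    using corr_mem[OF D1(3), of d] corr_mem[OF f2 c2] D1 by auto
qed


lemma shat_lower_aux:
  fixes ys :: "int list" assumes a: "length ys = d \<and> set ys \<subseteq> {-1, 1}"
  shows "\<exists>h\<in>corr_class UNIV d. \<forall>i<d. h (length (take i ys)) = ys ! i"
proof -
  define D where "D = {i. i < d \<and> ys ! i = -1}"
  have "finite D" "card D \<le> d" unfolding D_def
    using card_mono[of "{..<d}" "{i. i < d \<and> ys ! i = -1}"] by auto
  then have m: "(\<lambda>x. if x \<in> D then -1 else 1::int) \<in> corr_class UNIV d" by (rule corr_mem)
  have "\<forall>i<d. (\<lambda>x. if x \<in> D then -1 else 1::int) (length (take i ys)) = ys ! i"
  proof (intro allI impI)
    fix i assume "i < d"
    then have "i < length ys" using a by simp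
    then have "ys ! i \<in> set ys" by (rule nth_mem)
    moreover have "set ys \<subseteq> {-1,1}" using a by simp
    ultimately have "ys ! i \<in> {-1,1}" by (rule rev_subsetD)
    then have "ys ! i = -1 \<or> ys ! i = 1" by simp
    show "(\<lambda>x. if x \<in> D then -1 else 1::int) (length (take i ys)) = ys ! i"
    proof -
      have li: "length (take i ys) = i" using \<open>i < d\<close> a by simp
      show ?thesis using \<open>ys ! i = -1 \<or> ys ! i = 1\<close>
      proof
        assume "ys ! i = -1" then have "i \<in> D" using \<open>i < d\<close> by (simp add: D_def)
        then show ?thesis using \<open>ys ! i = -1\<close> li by simp
      next
        assume "ys ! i = 1" then have "i \<notin> D" by (simp add: D_def)
        then show ?thesis using \<open>ys ! i = 1\<close> li by simp
      qed
    qed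
  qed
  then show ?thesis using m by (rule bexI)
qed

lemma shat_lower: "shatters_tree UNIV (corr_class UNIV d) d"
proof -
  have A: "\<forall>ys. length ys = d \<and> set ys \<subseteq> {-1, 1} \<longrightarrow>
     (\<exists>h\<in>corr_class UNIV d. \<forall>i<d. h (length (take i ys)) = ys ! i)"
    by (intro allI impI) (rule shat_lower_aux)
  have B: "\<forall>p::int list. length p < d \<and> set p \<subseteq> {-1, 1} \<longrightarrow> length p \<in> (UNIV::nat set)"
    by (intro allI impI) (rule UNIV_I)
  show ?thesis unfolding shatters_tree_def
    by (rule exI[of _ length], rule conjI[OF B A])
qed
lemma shat_upper:
  assumes "shatters_tree UNIV (corr_class UNIV d) d'"
  shows "d' \<le> d"
proof (rule ccontr)
  assume "\<not> d' \<le> d"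
  obtain T where T: "\<And>ys. length ys = d' \<Longrightarrow> set ys \<subseteq> {-1,1} \<Longrightarrow>
     (\<exists>h\<in>corr_class UNIV d. \<forall>i<d'. h (T (take i ys)) = ys ! i)"
    using assms unfolding shatters_tree_def by blast
  define ys where "ys = replicate d' (-1::int)"
  obtain h where h: "h \<in> corr_class UNIV d" "\<forall>i<d'. h (T (take i ys)) = ys ! i"
  proof -
    have "set ys \<subseteq> {-1,1}" unfolding ys_def set_replicate_conv_if by simp
    then show ?thesis using T[of ys] that by (auto simp: ys_def)
  qed
  then obtain D where D: "finite D" "card D \<le> d" "h = (\<lambda>x. 1 - 2 * (if x \<in> D then 1 else 0))"
    unfolding corr_class_def by auto
  have inD: "T (replicate i (-1)) \<in> D" if "i < d'" for i
  proof -
    have "h (T (replicate i (-1))) = -1" using h(2) that by (simp add: ys_def)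
    then show ?thesis using D(3) by (auto split: if_splits)
  qed
  have ne: "T (replicate i (-1)) \<noteq> T (replicate j (-1))" if "i < j" "j < d'" for i j
  proof
    assume eq: "T (replicate i (-1)) = T (replicate j (-1))"
    define zs where "zs = replicate j (-1::int) @ [1] @ replicate (d' - j - 1) (-1)"
    have lz: "length zs = d'" using that by (simp add: zs_def)
    have sz: "set zs \<subseteq> {-1,1}" unfolding zs_def set_append set_replicate_conv_if by simp
    obtain g where g: "\<forall>k<d'. g (T (take k zs)) = zs ! k" using T[OF lz sz] by blast
    have t1: "take i zs = replicate i (-1)" using that by (simp add: zs_def)
    have n1: "zs ! i = -1" using that by (simp add: zs_def nth_append)
    have t2: "take j zs = replicate j (-1)" by (simp add: zs_def)
    have n2: "zs ! j = 1" by (simp add: zs_def nth_append)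
    have "i < d'" using that by simp
    have "g (T (replicate i (-1))) = -1"
      using g[rule_format, OF \<open>i < d'\<close>] unfolding t1 n1 .
    moreover have "g (T (replicate j (-1))) = 1"
      using g[rule_format, OF \<open>j < d'\<close>] unfolding t2 n2 .
    ultimately show False using eq by simp
  qed
  have "inj_on (\<lambda>i. T (replicate i (-1::int))) {..<d'}"
  proof (rule inj_onI)
    fix i j assume "i \<in> {..<d'}" "j \<in> {..<d'}" "T (replicate i (-1::int)) = T (replicate j (-1))"
    then show "i = j"
    proof (cases i j rule: linorder_cases)
      case less then show ?thesis using ne[of i j] \<open>j \<in> {..<d'}\<close> \<open>T (replicate i (-1::int)) = T (replicate j (-1))\<close> by simp
    next
      case greater then show ?thesis using ne[of j i] \<open>i \<in> {..<d'}\<close> \<open>T (replicate i (-1::int)) = T (replicate j (-1))\<close> by simp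
    qed
  qed
  then have "card ((\<lambda>i. T (replicate i (-1::int))) ` {..<d'}) = d'" by (simp add: card_image)
  moreover have "(\<lambda>i. T (replicate i (-1::int))) ` {..<d'} \<subseteq> D" using inD by auto
  then have "card ((\<lambda>i. T (replicate i (-1::int))) ` {..<d'}) \<le> card D" by (rule card_mono[OF D(1)])
  ultimately have "d' \<le> card D" by simp
  then show False using D(2) \<open>\<not> d' \<le> d\<close> by simp
qed


lemma play_nth_AY: "t < N \<Longrightarrow> play AX (AY B) L N ! t =
   (t, L (labels_of (play AX (AY B) L t)) t,
    AY B (play AX (AY B) L t) t (L (labels_of (play AX (AY B) L t)) t))"
  by (rule play_nth)

lemma lab_pm: "AY B h x p = -1 \<or> AY B h x p = 1"
  by (simp add: AY_def)

lemma lbias_play: "l_bias UNIV (corr_class UNIV d) l (labels_of (play AX (AY (d+l)) L n))"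
proof -
  define P where "P = play AX (AY (d+l)) L n"
  define Neg where "Neg = {t. t < length P \<and> snd (snd (P ! t)) = -1}"
  have fin: "finite Neg" unfolding Neg_def by simp
  have "card Neg = cnt P" unfolding Neg_def cnt_card ..
  then have cN: "card Neg \<le> d + l" using cnt_inv[of "d+l" L n] P_def by simp
  have hm: "(\<lambda>x. if x \<in> Neg then -1 else 1::int) \<in> biased_class UNIV (corr_class UNIV d) l"
    by (rule biased_mem[OF fin cN])
  have lp: "length P = n" unfolding P_def by (rule play_len)
  have "\<forall>t<length (labels_of P). (\<lambda>x. if x \<in> Neg then -1 else 1::int) (fst (labels_of P ! t)) = snd (labels_of P ! t)"
  proof (intro allI impI)
    fix t assume "t < length (labels_of P)"
    then have tn: "t < n" using lp labels_len by metis
    have e: "P ! t = (t, L (labels_of (play AX (AY (d+l)) L t)) t,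
      AY (d+l) (play AX (AY (d+l)) L t) t (L (labels_of (play AX (AY (d+l)) L t)) t))"
      unfolding P_def by (rule play_nth_AY[OF tn])
    have ln: "labels_of P ! t = (fst (P ! t), snd (snd (P ! t)))" using tn lp by (simp add: labels_nth)
    have "snd (snd (P ! t)) = -1 \<or> snd (snd (P ! t)) = 1" unfolding e by (simp add: lab_pm)
    then show "(\<lambda>x. if x \<in> Neg then -1 else 1::int) (fst (labels_of P ! t)) = snd (labels_of P ! t)"
    proof
      assume a: "snd (snd (P ! t)) = -1"
      then have "t \<in> Neg" unfolding Neg_def using tn lp by simp
      then show ?thesis unfolding ln using a e by simp
    next
      assume a: "snd (snd (P ! t)) = 1"
      then have "t \<notin> Neg" unfolding Neg_def by simp
      then show ?thesis unfolding ln using a e by simp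
    qed
  qed
  then show ?thesis unfolding l_bias_def P_def[symmetric] using hm by (rule bexI)
qed

lemma cnt_mono: "n \<le> N \<Longrightarrow> cnt (play AX ay L n) \<le> cnt (play AX ay L N)"
proof (induction N)
  case 0 then show ?case by simp
next
  case (Suc N)
  have "cnt (play AX ay L N) \<le> cnt (play AX ay L (Suc N))"
    by (simp add: play_Suc' cnt_def)
  then show ?case using Suc by (cases "n = Suc N") auto
qed

lemma mistakes_ge:
  "cnt (play AX (AY B) L N) \<le> mistakes L (labels_of (play AX (AY B) L N))"
proof -
  define P where "P = play AX (AY B) L N"
  define s where "s = labels_of P"
  have lp: "length P = N" unfolding P_def by (rule play_len)
  have ls: "length s = N" unfolding s_def using lp labels_len by metis
  have sub: "{t. t < length P \<and> snd (snd (P ! t)) = -1} \<subseteq>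
     {t. t < length s \<and> L (take t s) (fst (s ! t)) = Some (- snd (s ! t))}"
  proof
    fix t assume "t \<in> {t. t < length P \<and> snd (snd (P ! t)) = -1}"
    then have tn: "t < N" and a: "snd (snd (P ! t)) = -1" using lp by auto
    have e: "P ! t = (t, L (labels_of (play AX (AY B) L t)) t,
      AY B (play AX (AY B) L t) t (L (labels_of (play AX (AY B) L t)) t))"
      unfolding P_def by (rule play_nth_AY[OF tn])
    have pr: "L (labels_of (play AX (AY B) L t)) t = Some 1"
      using a unfolding e by (simp add: AY_def split: if_splits)
    have tk: "take t s = labels_of (play AX (AY B) L t)"
      unfolding s_def labels_take P_def using tn play_take[of t N] by simp
    have ln: "s ! t = (t, -1)" unfolding s_def using tn lp a e by (simp add: labels_nth)
    show "t \<in> {t. t < length s \<and> L (take t s) (fst (s ! t)) = Some (- snd (s ! t))}"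
      using tn ls tk ln pr by simp
  qed
  have "cnt P \<le> mistakes L s" unfolding cnt_card mistakes_def
    by (rule card_mono[OF _ sub]) simp
  then show ?thesis unfolding P_def s_def .
qed

lemma all_nontrivial:
  assumes v: "valid_learner L" and g: "guarantees UNIV (corr_class UNIV d) l k L"
    and kl: "k < l + d" and tn: "t < N"
  shows "fst (snd (play AX (AY (d+l)) L N ! t)) = Some (- snd (snd (play AX (AY (d+l)) L N ! t))) \<or>
         fst (snd (play AX (AY (d+l)) L N ! t)) = None"
proof (rule ccontr)
  define pr where "pr = L (labels_of (play AX (AY (d+l)) L t)) t"
  define lab where "lab = AY (d+l) (play AX (AY (d+l)) L t) t pr"
  have e: "play AX (AY (d+l)) L N ! t = (t, pr, lab)"
    unfolding pr_def lab_def by (rule play_nth_AY[OF tn])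
  assume "\<not> ?thesis"
  then have n1: "pr \<noteq> Some (- lab)" and n2: "pr \<noteq> None" unfolding e by auto
  have "pr \<in> {None, Some (-1), Some 1}" using v unfolding valid_learner_def pr_def by blast
  then have "pr = Some (-1) \<or> pr = Some 1" using n2 by blast
  moreover have "pr \<noteq> Some (-1)"
  proof
    assume "pr = Some (-1)" then have "lab = 1" unfolding lab_def by (simp add: AY_def)
    then show False using n1 \<open>pr = Some (-1)\<close> by simp
  qed
  ultimately have p1: "pr = Some 1" by blast
  have "\<not> cnt (play AX (AY (d+l)) L t) < d + l"
  proof
    assume "cnt (play AX (AY (d+l)) L t) < d + l"
    then have "lab = -1" unfolding lab_def using p1 by (simp add: AY_def)
    then show False using n1 p1 by simp
  qed
  then have "d + l \<le> cnt (play AX (AY (d+l)) L N)"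
    using cnt_mono[of t N "AY (d+l)" L] tn by simp
  also have "\<dots> \<le> mistakes L (labels_of (play AX (AY (d+l)) L N))" by (rule mistakes_ge)
  also have "\<dots> \<le> k" using g lbias_play[of d l L N] unfolding guarantees_def by blast
  finally show False using kl by simp
qed

theorem mainTheorem2:
  fixes d :: nat
  shows "\<exists>(X :: nat set) (H :: hyp set). hyp_class X H \<and> ldim_eq X H d \<and>
    (\<forall>k l :: nat. k < l + d \<longrightarrow>
      (\<forall>m :: nat. \<exists>(ax :: adv_x) (ay :: adv_y).
         (\<forall>L. valid_learner L \<longrightarrow> (\<forall>n.
             (\<forall>t<length (play ax ay L n). fst (play ax ay L n ! t) \<in> X) \<and>
             l_bias X H l (labels_of (play ax ay L n)))) \<and>
         (\<forall>L. valid_learner L \<and> guarantees X H l k L \<longrightarrow>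
             (\<exists>n. nontrivial_rounds (play ax ay L n) \<ge> m + 1))))"
proof -
  have hc: "hyp_class UNIV (corr_class UNIV d)" unfolding hyp_class_def corr_class_def by (auto split: if_splits)
  have ld: "ldim_eq UNIV (corr_class UNIV d) d" unfolding ldim_eq_def
    using shat_lower shat_upper by blast
  have main: "\<exists>(ax :: adv_x) (ay :: adv_y).
         (\<forall>L. valid_learner L \<longrightarrow> (\<forall>n.
             (\<forall>t<length (play ax ay L n). fst (play ax ay L n ! t) \<in> UNIV) \<and>
             l_bias UNIV (corr_class UNIV d) l (labels_of (play ax ay L n)))) \<and>
         (\<forall>L. valid_learner L \<and> guarantees UNIV (corr_class UNIV d) l k L \<longrightarrow>
             (\<exists>n. nontrivial_rounds (play ax ay L n) \<ge> m + 1))"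
    if kl: "k < l + d" for k l m
  proof (rule exI[of _ AX], rule exI[of _ "AY (d+l)"], rule conjI)
    show "\<forall>L. valid_learner L \<longrightarrow> (\<forall>n.
             (\<forall>t<length (play AX (AY (d+l)) L n). fst (play AX (AY (d+l)) L n ! t) \<in> UNIV) \<and>
             l_bias UNIV (corr_class UNIV d) l (labels_of (play AX (AY (d+l)) L n)))"
      using lbias_play by blast
    show "\<forall>L. valid_learner L \<and> guarantees UNIV (corr_class UNIV d) l k L \<longrightarrow>
             (\<exists>n. nontrivial_rounds (play AX (AY (d+l)) L n) \<ge> m + 1)"
    proof (intro allI impI)
      fix L assume a: "valid_learner L \<and> guarantees UNIV (corr_class UNIV d) l k L"
      define h where "h = play AX (AY (d+l)) L (m+1)"
      have lh: "length h = m + 1" unfolding h_def by (rule play_len)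
      have "{t. t < length h \<and> (fst (snd (h ! t)) = Some (- snd (snd (h ! t))) \<or> fst (snd (h ! t)) = None)}
            = {t. t < m+1}"
      proof (rule Collect_cong)
        fix t
        have "t < m + 1 \<Longrightarrow> fst (snd (h ! t)) = Some (- snd (snd (h ! t))) \<or> fst (snd (h ! t)) = None"
          unfolding h_def using a by (intro all_nontrivial[OF _ _ kl]) auto
        note nt = this
        show "(t < length h \<and> (fst (snd (h ! t)) = Some (- snd (snd (h ! t))) \<or> fst (snd (h ! t)) = None))
           = (t < m + 1)" unfolding lh
        proof
          assume "t < m + 1" then show "t < m + 1 \<and> (fst (snd (h ! t)) = Some (- snd (snd (h ! t))) \<or> fst (snd (h ! t)) = None)"
            using nt by simp
        qed simp
      qed
      then have "nontrivial_rounds h = m + 1" unfolding nontrivial_rounds_def by simp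
      then show "\<exists>n. nontrivial_rounds (play AX (AY (d+l)) L n) \<ge> m + 1"
        unfolding h_def by (intro exI[of _ "m+1"]) simp
    qed
  qed
  show ?thesis
    apply (rule exI[of _ "UNIV :: nat set"], rule exI[of _ "corr_class UNIV d"])
    using hc ld main by blast
qed

end
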